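(* Let $k\ge2$, $n\ge1$ be integers, let $\bar{\mathcal{P}}\in\mathbb{R}^{[k,n]}$ be a columnwise-substochastic tensor, $\mathbf{v}\in\mathbb{R}^n$ a stochastic vector and $\alpha\in[0,1)$. Let $\Delta:=\{\mathbf{y}\in\mathbb{R}^n_+:\mathbf{e}^T\mathbf{y}\le(1-\alpha)^{-\frac{1}{k-1}}\}$ and let $\mathbf{y}_c\in\Delta$. Then the equation $(\mathbf{e}^T\mathbf{y}_{c+1})^{k-2}\mathbf{y}_{c+1}=\alpha\bar{\mathcal{P}}\mathbf{y}_c^{k-1}+\mathbf{v}$ in the unknown $\mathbf{y}_{c+1}$ has the closed-form solution $$\mathbf{y}_{c+1}=\left(1+\alpha\mathbf{e}^T(\bar{\mathcal{P}}\mathbf{y}_c^{k-1})\right)^{-\frac{k-2}{k-1}}\left(\alpha\bar{\mathcal{P}}\mathbf{y}_c^{k-1}+\mathbf{v}\right)\in\Delta,$$ which is exactly $\mathbf{y}_{c+1}=\Phi(\mathbf{y}_c)$, where $\Phi(\mathbf{y}):=(1+\alpha\mathbf{e}^T(\bar{\mathcal{P}}\mathbf{y}^{k-1}))^{-\frac{k-2}{k-1}}(\mathbf{v}+\alpha\bar{\mathcal{P}}\mathbf{y}^{k-1})$.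
   Context: For $\mathcal{P}\in\mathbb{R}^{[k,n]}$ (real tensors of order $k$, dimension $n$) and $\mathbf{y}\in\mathbb{R}^n$, $(\mathcal{P}\mathbf{y}^{k-1})_i=\sum_{i_2,\dots,i_k}p_{i i_2\dots i_k}y_{i_2}\cdots y_{i_k}$. $\bar{\mathcal{P}}$ is columnwise-substochastic if its entries are nonnegative and $\sum_{i}\bar p_{i i_2\dots i_k}\le1$ for all $i_2,\dots,i_k$. $\mathbf{e}$ is the all-ones vector; a stochastic vector is nonnegative with entries summing to $1$. The left-hand side $(\mathbf{e}^T\mathbf{y})^{k-2}\mathbf{y}$ equals $(I\circ\mathbf{e}^{\circ(k-2)})\mathbf{y}^{k-1}$, where $I\circ\mathbf{e}^{\circ(k-2)}$ is the tensor with entries $\delta_{i_1i_2}$. *)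

theory Defs
  imports Complex_Main
begin

text \<open>Coordinates are indexed by a finite type 'n (so n = CARD('n) >= 1).
  A real tensor of order k and dimension n is P :: 'n => 'n list => real,
  where P i js is the entry p_{i i_2 ... i_k} for js = [i_2,...,i_k] of length k-1
  (values at other list lengths are irrelevant).\<close>

definition tapply :: "nat \<Rightarrow> ('n::finite \<Rightarrow> 'n list \<Rightarrow> real) \<Rightarrow> ('n \<Rightarrow> real) \<Rightarrow> 'n \<Rightarrow> real" where
  "tapply k P y i = (\<Sum>js\<in>{js. length js = k - 1}. P i js * prod_list (map y js))"

definition col_substochastic :: "nat \<Rightarrow> ('n::finite \<Rightarrow> 'n list \<Rightarrow> real) \<Rightarrow> bool" where
  "col_substochastic k P \<longleftrightarrow>
     (\<forall>i js. length js = k - 1 \<longrightarrow> 0 \<le> P i js) \<and>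
     (\<forall>js. length js = k - 1 \<longrightarrow> (\<Sum>i\<in>UNIV. P i js) \<le> 1)"

definition esum :: "('n::finite \<Rightarrow> real) \<Rightarrow> real" where
  "esum y = (\<Sum>i\<in>UNIV. y i)"

definition stochastic :: "('n::finite \<Rightarrow> real) \<Rightarrow> bool" where
  "stochastic v \<longleftrightarrow> (\<forall>i. 0 \<le> v i) \<and> esum v = 1"

definition Delta :: "nat \<Rightarrow> real \<Rightarrow> ('n::finite \<Rightarrow> real) set" where
  "Delta k \<alpha> = {y. (\<forall>i. 0 \<le> y i) \<and> esum y \<le> (1 - \<alpha>) powr (- 1 / (real k - 1))}"

definition Phi :: "nat \<Rightarrow> real \<Rightarrow> ('n::finite \<Rightarrow> 'n list \<Rightarrow> real) \<Rightarrow> ('n \<Rightarrow> real) \<Rightarrow> ('n \<Rightarrow> real) \<Rightarrow> 'n \<Rightarrow> real" where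
  "Phi k \<alpha> P v y = (\<lambda>i. (1 + \<alpha> * esum (tapply k P y)) powr (- (real k - 2) / (real k - 1))
                         * (v i + \<alpha> * tapply k P y i))"

end

theory Submission
  imports Defs
begin

lemma lists_len_finite: "finite {js::('n::finite) list. length js = m}"
proof -
  have "{js::'n list. length js = m} = {js. set js \<subseteq> UNIV \<and> length js = m}" by simp
  thus ?thesis using finite_lists_length_eq[of "UNIV::'n set" m] by simp
qed

lemma sum_prod_lists: "(\<Sum>js\<in>{js::('n::finite) list. length js = m}. prod_list (map y js)) = esum y ^ m"
proof (induction m)
  case 0
  have "{js::'n list. length js = 0} = {[]}" by auto
  then show ?case by simp
next
  case (Suc m)
  have eq: "{js::'n list. length js = Suc m} = (\<lambda>(x,js). x#js) ` (UNIV \<times> {js. length js = m})"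
    by (auto simp: length_Suc_conv image_iff)
  have inj: "inj_on (\<lambda>(x::'n,js). x#js) (UNIV \<times> {js. length js = m})"
    by (auto simp: inj_on_def)
  have "(\<Sum>js\<in>{js::'n list. length js = Suc m}. prod_list (map y js))
      = (\<Sum>(x,js)\<in>UNIV \<times> {js::'n list. length js = m}. y x * prod_list (map y js))"
    unfolding eq by (subst sum.reindex[OF inj]) (simp add: o_def case_prod_beta)
  also have "\<dots> = (\<Sum>x\<in>UNIV. \<Sum>js\<in>{js::'n list. length js = m}. y x * prod_list (map y js))"
    by (subst sum.cartesian_product) simp
  also have "\<dots> = (\<Sum>x\<in>UNIV. y x * esum y ^ m)"
    by (simp add: sum_distrib_left[symmetric] Suc)
  also have "\<dots> = esum y ^ Suc m" by (simp add: esum_def sum_distrib_right)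
  finally show ?case .
qed

lemma esum_tapply_bound:
  assumes "col_substochastic k P" "\<forall>i. 0 \<le> y i"
  shows "0 \<le> esum (tapply k P y) \<and> esum (tapply k P y) \<le> esum y ^ (k - 1)"
proof -
  have pos: "\<And>js. 0 \<le> prod_list (map y js)"
    using assms(2) by (intro prod_list_nonneg) auto
  have "esum (tapply k P y) = (\<Sum>js\<in>{js. length js = k - 1}. (\<Sum>i\<in>UNIV. P i js) * prod_list (map y js))"
    unfolding esum_def tapply_def by (subst sum.swap) (simp add: sum_distrib_right)
  moreover have "\<dots> \<le> (\<Sum>js\<in>{js. length js = k - 1}. prod_list (map y js))"
    using assms(1) pos unfolding col_substochastic_def
    by (intro sum_mono mult_left_le_one_le) (auto intro: sum_nonneg)
  moreover have "0 \<le> (\<Sum>js\<in>{js. length js = k - 1}. (\<Sum>i\<in>UNIV. P i js) * prod_list (map y js))"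
    using assms(1) pos unfolding col_substochastic_def
    by (intro sum_nonneg mult_nonneg_nonneg sum_nonneg) auto
  ultimately show ?thesis using sum_prod_lists[where m="k-1" and y=y] by simp
qed

theorem lemma4p1:
  fixes k :: nat and P :: "'n::finite \<Rightarrow> 'n list \<Rightarrow> real" and v yc :: "'n \<Rightarrow> real" and \<alpha> :: real
  assumes "k \<ge> 2"
    and "col_substochastic k P"
    and "stochastic v"
    and "0 \<le> \<alpha>" and "\<alpha> < 1"
    and "yc \<in> Delta k \<alpha>"
  shows "let w = (\<lambda>i. \<alpha> * tapply k P yc i + v i);
             y' = (\<lambda>i. (1 + \<alpha> * esum (tapply k P yc)) powr (- (real k - 2) / (real k - 1)) * w i)
         in (\<forall>i. esum y' ^ (k - 2) * y' i = w i) \<and> y' \<in> Delta k \<alpha> \<and> y' = Phi k \<alpha> P v yc"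
proof -
  define s where "s = esum (tapply k P yc)"
  define T where "T = 1 + \<alpha> * s"
  define r where "r = real k - 1"
  define w where "w = (\<lambda>i. \<alpha> * tapply k P yc i + v i)"
  define y' where "y' = (\<lambda>i. T powr (- (real k - 2) / r) * w i)"
  have r1: "r \<ge> 1" using assms(1) unfolding r_def by simp
  have yc: "\<forall>i. 0 \<le> yc i" "esum yc \<le> (1 - \<alpha>) powr (- 1 / r)"
    using assms(6) unfolding Delta_def r_def by auto
  have sb: "0 \<le> s" "s \<le> esum yc ^ (k - 1)"
    using esum_tapply_bound[OF assms(2) yc(1)] unfolding s_def by auto
  have T1: "T \<ge> 1" unfolding T_def using sb assms(4) by simp
  have v: "\<forall>i. 0 \<le> v i" "esum v = 1" using assms(3) unfolding stochastic_def by auto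
  have tpos: "\<And>i. 0 \<le> tapply k P yc i"
    unfolding tapply_def using assms(2) yc(1) unfolding col_substochastic_def
    by (intro sum_nonneg mult_nonneg_nonneg prod_list_nonneg) auto
  have wpos: "\<And>i. 0 \<le> w i" unfolding w_def using tpos v assms(4) by (simp add: add_nonneg_nonneg)
  have esw: "esum w = T"
    unfolding w_def T_def s_def esum_def
    using v(2) by (simp add: sum.distrib sum_distrib_left[symmetric] esum_def)
  have esy: "esum y' = T powr (1 / r)"
  proof -
    have "esum y' = T powr (- (real k - 2) / r) * T"
      unfolding y'_def esum_def using esw by (simp add: sum_distrib_left[symmetric] esum_def)
    also have "\<dots> = T powr (- (real k - 2) / r + 1)" using T1 by (simp add: powr_add)
    also have "- (real k - 2) / r + 1 = 1 / r" using r1 unfolding r_def by (simp add: field_simps)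
    finally show ?thesis .
  qed
  have eq1: "\<forall>i. esum y' ^ (k - 2) * y' i = w i"
  proof
    fix i
    have "esum y' ^ (k - 2) = T powr (1 / r * real (k - 2))"
      using T1 esy by (simp add: powr_realpow[symmetric] powr_powr)
    also have "1 / r * real (k - 2) = (real k - 2) / r" using assms(1) by (simp add: of_nat_diff)
    finally have "esum y' ^ (k - 2) * y' i = T powr ((real k - 2) / r) * T powr (- (real k - 2) / r) * w i"
      unfolding y'_def by simp
    also have "\<dots> = w i" using T1 by (simp add: powr_add[symmetric] diff_divide_distrib[symmetric] add_divide_distrib[symmetric])
    finally show "esum y' ^ (k - 2) * y' i = w i" .
  qed
  have a1: "0 < 1 - \<alpha>" using assms(5) by simp
  have "esum yc ^ (k - 1) \<le> ((1 - \<alpha>) powr (- 1 / r)) ^ (k - 1)"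
    using yc esum_def by (intro power_mono) (auto simp: esum_def intro: sum_nonneg)
  also have "\<dots> = (1 - \<alpha>) powr (- 1 / r * real (k - 1))"
    using a1 by (simp add: powr_realpow[symmetric] powr_powr)
  also have "- 1 / r * real (k - 1) = -1" using r1 assms(1) unfolding r_def by (simp add: of_nat_diff)
  finally have "s \<le> 1 / (1 - \<alpha>)" using sb a1 by (simp add: powr_minus divide_inverse)
  hence "\<alpha> * s \<le> \<alpha> / (1 - \<alpha>)" using assms(4) by (simp add: mult_left_mono divide_inverse)
  hence "T \<le> 1 / (1 - \<alpha>)" unfolding T_def using a1 by (simp add: field_simps)
  hence "T powr (1 / r) \<le> (1 / (1 - \<alpha>)) powr (1 / r)"
    using T1 r1 by (intro powr_mono2) auto
  also have "\<dots> = (1 - \<alpha>) powr (- 1 / r)"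
    using a1 by (simp add: inverse_powr powr_minus divide_inverse)
  finally have D: "y' \<in> Delta k \<alpha>"
    unfolding Delta_def using esy wpos T1 unfolding y'_def r_def by auto
  have Ph: "y' = Phi k \<alpha> P v yc"
    unfolding Phi_def y'_def T_def s_def w_def r_def by (auto simp: add.commute)
  show ?thesis unfolding Let_def
    using eq1 D Ph unfolding y'_def w_def T_def s_def r_def by blast
qed

end
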